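(* Let $D=\mathrm{diag}(1,-1,1,-1,\ldots)=(1,-x)$, $\mathbb{F}^{\rm S}=(1,x(1+x))$, $\mathbb{L}^{\rm S}=(1+2x,x(1+x))$, and write $D(\mathbb{F}^{\rm S})^{-1}D=[r_{ij}]_{i,j\ge0}$ and $D(\mathbb{L}^{\rm S})^{-1}D=[q_{ij}]_{i,j\ge0}$. Then: (a) $r_{00}=1$, and for $i=1,2,\ldots$ and $j=2,3,\ldots$: $r_{i0}=0$, $r_{i1}=\frac{1}{i}\binom{2i-2}{i-1}$, and $r_{ij}=-r_{i-1,j-2}+r_{i,j-1}$. (b) $q_{i0}=\binom{2i}{i}$ for $i=0,1,2,\ldots$; $q_{i1}=\frac12\binom{2i}{i}$ for $i=1,2,\ldots$; and $q_{ij}=-q_{i-1,j-2}+q_{i,j-1}$ for $i=1,2,\ldots$, $j=2,3,\ldots$.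
   Context: All matrices are infinite with rows and columns indexed by $0,1,2,\ldots$. For formal power series $g(x)=g_0+g_1x+\cdots$ with $g_0\ne0$ and $f(x)=f_1x+f_2x^2+\cdots$ with $f_1\ne0$, $(g(x),f(x))$ denotes the (Riordan) infinite lower triangular matrix whose $j$-th column has generating function $g(x)f(x)^j$. These matrices form a group under matrix multiplication with $(g,f)(h,l)=(g\cdot h(f),l(f))$. *)

theory Defs
  imports "HOL-Computational_Algebra.Formal_Power_Series"
begin

text \<open>Infinite matrices are functions nat => nat => 'a (row index first).
  The Riordan array (g,f): column j has generating function g * f^j.\<close>
definition riordan :: "'a::comm_ring_1 fps \<Rightarrow> 'a fps \<Rightarrow> nat \<Rightarrow> nat \<Rightarrow> 'a" where
  "riordan g f i j = fps_nth (g * f ^ j) i"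

definition lower_tri :: "(nat \<Rightarrow> nat \<Rightarrow> 'a::zero) \<Rightarrow> bool" where
  "lower_tri M \<longleftrightarrow> (\<forall>i j. i < j \<longrightarrow> M i j = 0)"

text \<open>Matrix product; the sum over k \<le> i is the full product whenever the
  left factor is lower triangular (all matrices used here are).\<close>
definition ltmult :: "(nat \<Rightarrow> nat \<Rightarrow> 'a::comm_ring_1) \<Rightarrow> (nat \<Rightarrow> nat \<Rightarrow> 'a) \<Rightarrow> nat \<Rightarrow> nat \<Rightarrow> 'a" where
  "ltmult A B i j = (\<Sum>k\<le>i. A i k * B k j)"

definition idm :: "nat \<Rightarrow> nat \<Rightarrow> 'a::comm_ring_1" where
  "idm i j = (if i = j then 1 else 0)"

definition is_lt_inverse :: "(nat \<Rightarrow> nat \<Rightarrow> 'a::comm_ring_1) \<Rightarrow> (nat \<Rightarrow> nat \<Rightarrow> 'a) \<Rightarrow> bool" where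
  "is_lt_inverse A B \<longleftrightarrow> lower_tri B \<and> ltmult A B = idm \<and> ltmult B A = idm"

end

theory Submission
  imports Defs
begin
unbundle fps_syntax


lemma pow_nth_lt: "(f::'a::idom fps) $ 0 = 0 \<Longrightarrow> n < k \<Longrightarrow> (f^k) $ n = 0"
  using startsby_zero_power_prefix by blast

lemma compose_mult_nth:
  fixes g a f :: "real fps"
  assumes f0: "f $ 0 = 0"
  shows "(g * (a oo f)) $ i = (\<Sum>k\<le>i. a $ k * (g*f^k) $ i)"
proof -
  have "(g * (a oo f)) $ i = (\<Sum>m=0..i. g $ m * (\<Sum>k=0..i-m. a $ k * (f^k) $ (i-m)))"
    by (simp add: fps_mult_nth fps_compose_nth)
  also have "\<dots> = (\<Sum>m=0..i. g $ m * (\<Sum>k\<le>i. a $ k * (f^k) $ (i-m)))"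
  proof (rule sum.cong[OF refl])
    fix m assume m: "m \<in> {0..i}"
    have "(\<Sum>k=0..i-m. a $ k * (f^k) $ (i-m)) = (\<Sum>k\<le>i. a $ k * (f^k) $ (i-m))"
      by (rule sum.mono_neutral_left) (auto simp: pow_nth_lt[OF f0])
    then show "g $ m * (\<Sum>k=0..i-m. a $ k * (f^k) $ (i-m)) = g $ m * (\<Sum>k\<le>i. a $ k * (f^k) $ (i-m))" by simp
  qed
  also have "\<dots> = (\<Sum>m=0..i. \<Sum>k\<le>i. a $ k * (g $ m * (f^k) $ (i-m)))"
    by (simp add: sum_distrib_left mult_ac)
  also have "\<dots> = (\<Sum>k\<le>i. \<Sum>m=0..i. a $ k * (g $ m * (f^k) $ (i-m)))"
    by (rule sum.swap)
  also have "\<dots> = (\<Sum>k\<le>i. a $ k * (g*f^k) $ i)"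
    by (simp add: fps_mult_nth sum_distrib_left)
  finally show ?thesis .
qed

lemma riordan_mult:
  fixes g f h l :: "real fps"
  assumes f0: "f $ 0 = 0"
  shows "ltmult (riordan g f) (riordan h l) = riordan (g * (h oo f)) (l oo f)"
proof (intro ext)
  fix i j
  have "riordan (g * (h oo f)) (l oo f) i j = (g * ((h * l^j) oo f)) $ i"
    by (simp add: riordan_def fps_compose_mult_distrib[OF f0] fps_compose_power[OF f0] mult_ac)
  also have "\<dots> = (\<Sum>k\<le>i. (h*l^j) $ k * (g*f^k) $ i)" by (rule compose_mult_nth[OF f0])
  finally show "ltmult (riordan g f) (riordan h l) i j = riordan (g * (h oo f)) (l oo f) i j"
    by (simp add: ltmult_def riordan_def mult_ac)
qed

lemma riordan_lt:
  fixes g f :: "real fps"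
  assumes f0: "f $ 0 = 0"
  shows "lower_tri (riordan g f)"
  unfolding lower_tri_def riordan_def
proof (intro allI impI)
  fix i j :: nat assume ij: "i < j"
  show "(g * f^j) $ i = 0" unfolding fps_mult_nth
    by (rule sum.neutral) (use ij pow_nth_lt[OF f0] in auto)
qed

lemma riordan_X: "riordan (1::real fps) fps_X = idm"
  by (auto simp: riordan_def idm_def fun_eq_iff)

lemma ltmult_assoc:
  assumes "lower_tri B"
  shows "ltmult (ltmult A B) C = ltmult A (ltmult B C)"
proof (intro ext)
  fix i j
  have "ltmult (ltmult A B) C i j = (\<Sum>l\<le>i. \<Sum>k\<le>i. A i k * B k l * C l j)"
    by (simp add: ltmult_def sum_distrib_right)
  also have "\<dots> = (\<Sum>k\<le>i. \<Sum>l\<le>i. A i k * B k l * C l j)" by (rule sum.swap)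
  also have "\<dots> = (\<Sum>k\<le>i. A i k * (\<Sum>l\<le>k. B k l * C l j))"
  proof (rule sum.cong[OF refl])
    fix k assume k: "k \<in> {..i}"
    have "(\<Sum>l\<le>k. B k l * C l j) = (\<Sum>l\<le>i. B k l * C l j)"
      by (rule sum.mono_neutral_left) (use k assms in \<open>auto simp: lower_tri_def\<close>)
    then show "(\<Sum>l\<le>i. A i k * B k l * C l j) = A i k * (\<Sum>l\<le>k. B k l * C l j)"
      by (simp add: sum_distrib_left mult_ac)
  qed
  finally show "ltmult (ltmult A B) C i j = ltmult A (ltmult B C) i j"
    by (simp add: ltmult_def)
qed

lemma idm_left: "ltmult idm A = A"
proof (intro ext)
  fix i j
  have "ltmult idm A i j = (\<Sum>k\<le>i. if i = k then A k j else 0)"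
    unfolding ltmult_def idm_def by (rule sum.cong) auto
  then show "ltmult idm A i j = A i j" by simp
qed

lemma idm_right: "lower_tri A \<Longrightarrow> ltmult A idm = A"
proof (intro ext)
  fix i j assume lt: "lower_tri A"
  have "ltmult A idm i j = (\<Sum>k\<le>i. if j = k then A i k else 0)"
    unfolding ltmult_def idm_def by (rule sum.cong) auto
  then show "ltmult A idm i j = A i j" using lt by (auto simp: lower_tri_def)
qed

lemma inv_unique:
  assumes "lower_tri A" "lower_tri X" "is_lt_inverse A B" "ltmult X A = idm"
  shows "X = B"
proof -
  have "X = ltmult X (ltmult A B)" using assms by (simp add: is_lt_inverse_def idm_right)
  also have "\<dots> = ltmult (ltmult X A) B" by (simp add: ltmult_assoc assms(1))
  also have "\<dots> = B" using assms(4) by (simp add: idm_left)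
  finally show ?thesis .
qed



lemma cb_rec: "real (Suc n) * real ((2*Suc n) choose Suc n) = (4*real n+2) * real ((2*n) choose n)"
proof -
  have e1: "Suc n * (Suc (Suc (2*n)) choose Suc n) = Suc (Suc (2*n)) * (Suc (2*n) choose n)"
    by (rule Suc_times_binomial)
  have e2: "Suc n * (Suc (2*n) choose Suc n) = Suc (2*n) * ((2*n) choose n)"
    by (rule Suc_times_binomial)
  have e3: "Suc n * (Suc (n + n) choose Suc n) = Suc n * (Suc (n + n) choose n)"
    by (rule Suc_times_binomial_add)
  have e3': "(Suc (2*n) choose Suc n) = (Suc (2*n) choose n)" using e3 unfolding mult_2
    using mult_left_cancel[of "Suc n"] by (simp only: nat.distinct(1) not_False_eq_True)
  define a where "a = real (Suc (Suc (2*n)) choose Suc n)"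
  define b where "b = real (Suc (2*n) choose n)"
  define c where "c = real ((2*n) choose n)"
  have r1: "(real n + 1) * a = (2 * real n + 2) * b" using arg_cong[OF e1, of real] 
    unfolding a_def b_def by (simp only: of_nat_mult) (simp del: binomial_Suc_Suc add: algebra_simps)
  have r2: "(real n + 1) * b = (2 * real n + 1) * c" using arg_cong[OF e2, of real] e3'
    unfolding c_def b_def by (simp only: of_nat_mult) (simp del: binomial_Suc_Suc add: algebra_simps)
  have "(real n + 1) * a = (real n + 1) * (2*b)" using r1 by (simp add: algebra_simps)
  then have ab: "a = 2*b" by (smt (verit) mult_cancel_left of_nat_0_le_iff)
  have "2 * Suc n = Suc (Suc (2*n))" by simp
  then have "real (Suc n) * real ((2*Suc n) choose Suc n) = (real n + 1) * a"
    unfolding a_def by (simp only:) simp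
  also have "\<dots> = 2 * ((real n + 1) * b)" using ab by simp
  also have "\<dots> = (4*real n+2) * c" using r2 by (simp add: algebra_simps)
  finally show ?thesis unfolding c_def .
qed



definition S :: "real fps" where "S = Abs_fps (\<lambda>n. real ((2*n) choose n))"

lemma S_nth: "S $ n = real ((2*n) choose n)" by (simp add: S_def)

lemma S_ode: "(1 - 4*fps_X) * fps_deriv S = 2 * S"
proof (rule fps_ext)
  fix n
  show "((1 - 4*fps_X) * fps_deriv S) $ n = (2 * S) $ n"
  proof (cases n)
    case 0 then show ?thesis by (simp add: S_nth numeral_fps_const algebra_simps)
  next
    case (Suc m)
    have "((1 - 4*fps_X) * fps_deriv S) $ n = (real n + 1) * S $ Suc n - 4 * (real n * S $ n)"
      using Suc by (simp add: numeral_fps_const algebra_simps)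
    also have "\<dots> = 2 * S $ n"
      using cb_rec[of n] by (simp add: S_nth algebra_simps)
    finally show ?thesis by (simp add: numeral_fps_const)
  qed
qed

lemma S_sq: "S^2 * (1 - 4*fps_X) = 1"
proof -
  let ?T = "S^2 * (1 - 4*fps_X)"
  have "fps_deriv ?T = 2 * S * ((1 - 4*fps_X) * fps_deriv S) - 4 * S^2"
    by (simp add: fps_deriv_power algebra_simps power2_eq_square numeral_fps_const)
  also have "\<dots> = 0" by (simp add: S_ode power2_eq_square)
  finally have "fps_deriv ?T = 0" .
  then have "?T = fps_const (?T $ 0)" by (simp only: fps_deriv_eq_0_iff)
  also have "?T $ 0 = 1" by (simp add: S_nth numeral_fps_const power2_eq_square)
  finally show ?thesis by simp
qed



definition Cat :: "real fps" where "Cat = fps_const (1/2) * (1 - (1 - 4*fps_X) * S)"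

lemma two_Cat: "2 * Cat = 1 - (1 - 4*fps_X) * S"
proof -
  have "(2::real fps) * fps_const (1/2) = 1" by (simp add: numeral_fps_const)
  then show ?thesis unfolding Cat_def by (metis mult.assoc mult_1)
qed

lemma Cat0: "Cat $ 0 = 0" by (simp add: Cat_def S_nth numeral_fps_const)

lemma Cat_eq: "Cat = fps_X + Cat^2"
proof -
  let ?Y = "(1 - 4*fps_X) * S"
  have a: "(1 - ?Y)^2 = 1 - 2*?Y + (1 - 4*fps_X)*(S^2*(1 - 4*fps_X))"
    by (simp add: power2_eq_square algebra_simps)
  have "4 * Cat^2 = (2*Cat)^2" by (simp add: power2_eq_square algebra_simps)
  also have "\<dots> = 2 - 2*?Y - 4*fps_X" unfolding two_Cat a S_sq by (simp add: algebra_simps)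
  also have "\<dots> = 2*(2*Cat) - 4*fps_X" unfolding two_Cat by (simp add: algebra_simps)
  finally have "4 * Cat = 4 * (fps_X + Cat^2)" by (simp add: algebra_simps)
  moreover have "(4::real fps) \<noteq> 0" by (simp add: numeral_fps_const)
  ultimately show ?thesis by (metis mult_left_cancel)
qed

lemma Cat_S: "S * (1 - 2*Cat) = 1"
  unfolding two_Cat using S_sq by (simp add: power2_eq_square algebra_simps)

lemma Cat_S2: "2 * (S * Cat) = S - 1"
proof -
  have "2 * (S * Cat) = S - S * (1 - 2*Cat)" by (simp add: algebra_simps)
  then show ?thesis using Cat_S by simp
qed

lemma Cat_nth: assumes "n \<ge> 1" shows "Cat $ n = (1 / real n) * real ((2*n - 2) choose (n - 1))"
proof -
  obtain m where n: "n = Suc m" using assms by (cases n) auto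
  have y: "(1 - 4*fps_X)*S = S - fps_const 4 * (fps_X * S)" by (simp add: numeral_fps_const algebra_simps)
  have "(2 * Cat) $ n = - (S $ n - 4 * S $ m)" unfolding two_Cat y using n
    by simp
  then have c: "2 * Cat $ n = 4 * S $ m - S $ n" by (simp add: numeral_fps_const)
  have r: "real n * S $ n = (4*real m+2) * S $ m" using cb_rec[of m] n by (simp add: S_nth)
  have "2*n - 2 = 2*m" "n - 1 = m" using n by auto
  then have t: "(1 / real n) * real ((2*n - 2) choose (n - 1)) = S $ m / real n" by (simp add: S_nth)
  have "real n * (2 * Cat $ n) = 2 * S $ m" unfolding c using r n by (simp add: algebra_simps)
  then show ?thesis unfolding t using n by (simp add: field_simps)
qed



lemma mX0: "(- fps_X :: real fps) $ 0 = 0" by simp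

definition Bn :: "real fps" where "Bn = Cat oo (- fps_X)"

lemma Bn0: "Bn $ 0 = 0" by (simp add: Bn_def Cat0)
lemma mBn0: "(- Bn) $ 0 = 0" by (simp add: Bn0)

lemma Bn_eq: "Bn = - fps_X + Bn^2"
proof -
  have "Bn = (fps_X + Cat^2) oo (- fps_X)" unfolding Bn_def using Cat_eq by simp
  also have "\<dots> = - fps_X + Bn^2"
    by (simp add: fps_compose_add_distrib fps_compose_power[OF mX0, symmetric] Bn_def)
  finally show ?thesis .
qed

lemma negneg: "(- fps_X :: real fps) oo (- fps_X) = fps_X"
  by (simp add: fps_compose_uminus)

lemma Bn_back: "Bn oo (- fps_X) = Cat"
  unfolding Bn_def fps_compose_assoc[OF mX0 mX0, symmetric] negneg by simp

lemma S_back: "(S oo (- fps_X)) oo (- fps_X) = S"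
  unfolding fps_compose_assoc[OF mX0 mX0, symmetric] negneg by simp

lemma comp_Fs: "(fps_X * (1 + fps_X)) oo (- Bn) = fps_X"
proof -
  have "(fps_X * (1 + fps_X)) oo (- Bn) = (- Bn) * (1 + - Bn)"
    by (simp add: fps_compose_mult_distrib[OF mBn0] fps_compose_add_distrib fps_X_fps_compose_startby0[OF mBn0])
  also have "\<dots> = Bn^2 - Bn" by (simp add: power2_eq_square algebra_simps)
  also have "\<dots> = fps_X" using Bn_eq by (metis add_diff_cancel_right' diff_minus_eq_add minus_diff_eq)
  finally show ?thesis .
qed

lemma comp_Ls: "(S oo (- fps_X)) * ((1 + 2*fps_X) oo (- Bn)) = 1"
proof -
  have "(1 + 2*fps_X) oo (- Bn) = 1 - 2 * Bn"
    by (simp add: fps_compose_mult_distrib[OF mBn0] fps_compose_add_distrib fps_X_fps_compose_startby0[OF mBn0])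
  also have "\<dots> = (1 - 2*Cat) oo (- fps_X)"
    by (simp add: fps_compose_mult_distrib[OF mX0] fps_compose_sub_distrib Bn_def)
  finally have "(S oo (- fps_X)) * ((1 + 2*fps_X) oo (- Bn)) = (S * (1 - 2*Cat)) oo (- fps_X)"
    by (simp add: fps_compose_mult_distrib[OF mX0])
  then show ?thesis using Cat_S by simp
qed

lemma riordan_Cat_rec:
  assumes "i \<ge> 1" "j \<ge> 2"
  shows "riordan g Cat i j = - riordan g Cat (i - 1) (j - 2) + riordan g Cat i (j - 1)"
proof -
  obtain k where j: "j = k + 2" using assms by (metis add.commute le_Suc_ex)
  have "g * Cat^j = g * Cat^(j-1) - fps_X * (g * Cat^(j-2))"
  proof -
    have "g * Cat^j = g * Cat^k * Cat^2" using j by (simp add: power_add mult_ac power2_eq_square)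
    also have "\<dots> = g * Cat^k * (Cat - fps_X)" using Cat_eq by (metis add_diff_cancel_left')
    also have "\<dots> = g * Cat^(j-1) - fps_X * (g * Cat^(j-2))" using j by (simp add: algebra_simps)
    finally show ?thesis .
  qed
  then show ?thesis using assms by (simp add: riordan_def)
qed


theorem theorem3p2:
  fixes FSinv LSinv :: "nat \<Rightarrow> nat \<Rightarrow> real"
  assumes "is_lt_inverse (riordan 1 (fps_X * (1 + fps_X))) FSinv"
    and "is_lt_inverse (riordan (1 + 2 * fps_X) (fps_X * (1 + fps_X))) LSinv"
  defines "D \<equiv> riordan (1::real fps) (- fps_X)"
  defines "r \<equiv> ltmult D (ltmult FSinv D)"
  defines "q \<equiv> ltmult D (ltmult LSinv D)"
  shows "r 0 0 = 1
     \<and> (\<forall>i\<ge>1. r i 0 = 0)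
     \<and> (\<forall>i\<ge>1. r i 1 = (1 / real i) * real ((2*i - 2) choose (i - 1)))
     \<and> (\<forall>i\<ge>1. \<forall>j\<ge>2. r i j = - r (i - 1) (j - 2) + r i (j - 1))
     \<and> (\<forall>i. q i 0 = real ((2*i) choose i))
     \<and> (\<forall>i\<ge>1. q i 1 = (1/2) * real ((2*i) choose i))
     \<and> (\<forall>i\<ge>1. \<forall>j\<ge>2. q i j = - q (i - 1) (j - 2) + q i (j - 1))"
proof -
  have lt: "(fps_X * (1 + fps_X) :: real fps) $ 0 = 0" by simp
  have Finv: "ltmult (riordan 1 (-Bn)) (riordan 1 (fps_X*(1+fps_X))) = idm"
    by (simp add: riordan_mult[OF mBn0] comp_Fs riordan_X)
  have FS: "FSinv = riordan 1 (-Bn)"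
    using inv_unique[OF riordan_lt[OF lt] riordan_lt[OF mBn0] assms(1) Finv] by simp
  have Linv: "ltmult (riordan (S oo (- fps_X)) (-Bn)) (riordan (1 + 2*fps_X) (fps_X*(1+fps_X))) = idm"
    by (simp add: riordan_mult[OF mBn0] comp_Fs comp_Ls riordan_X)
  have LS: "LSinv = riordan (S oo (- fps_X)) (-Bn)"
    using inv_unique[OF riordan_lt[OF lt] riordan_lt[OF mBn0] assms(2) Linv] by simp
  have r: "r = riordan 1 Cat"
    unfolding r_def FS D_def
    by (simp add: riordan_mult[OF mBn0] riordan_mult[OF mX0] fps_compose_uminus
        fps_X_fps_compose_startby0[OF mBn0] Bn_back)
  have q: "q = riordan S Cat"
    unfolding q_def LS D_def
    by (simp add: riordan_mult[OF mBn0] riordan_mult[OF mX0] fps_compose_uminus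
        fps_X_fps_compose_startby0[OF mBn0] Bn_back S_back)
  have q1: "q i 1 = (1/2) * real ((2*i) choose i)" if "i \<ge> 1" for i
  proof -
    have "(2 * (S * Cat)) $ i = (S - 1) $ i" using Cat_S2 by simp
    then have "2 * (S * Cat) $ i = S $ i" using that by (simp add: numeral_fps_const)
    then show ?thesis unfolding q by (simp add: riordan_def S_nth)
  qed
  show ?thesis
    using q1 riordan_Cat_rec[of _ _ 1] riordan_Cat_rec[of _ _ S]
    by (simp add: r q riordan_def Cat_nth S_nth)
qed

end
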